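(* Let $n\ge2$, let $g^{ij}=\delta^{i,n+1-j}$ be the anti-diagonal constant contravariant metric on $\mathbb R^n$, and let $S_0=\sum_{i=0}^{n-2}\xi_i\mu^{(n;i)}$ with constants $\xi_i$ and $\xi_0\neq0$. Then: (1) if $n\not\equiv1\pmod 3$, there exists an orthogonal transformation (a change of coordinates preserving $g$) which brings $S_0$ to $\mu^{(n;0)}$; (2) if $n\equiv1\pmod3$ and $n\neq4$, there exists an orthogonal transformation which brings $S_0$ to $\mu^{(n;0)}+\kappa\,\mu^{(n;\frac{n-1}{3})}$ for some constant $\kappa$.
   Context: For integers $n\ge1$, $k\ge0$ the symmetric bivector $\mu^{(n;k)}$ has components $\mu^{(n;k)ij}=[3(i+j)-2(n+2-k)]\,u^{i+j-1+k}$, $i,j=1,\dots,n$, with the convention $u^\beta\equiv0$ for $\beta>n$. Bivectors are transformed by coordinate changes in the usual tensorial way. *)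

theory Defs
  imports Complex_Main
begin

text \<open>Points of R^n are functions u :: nat \<Rightarrow> real, only coordinates 1..n matter.
  A bivector field is S :: (nat \<Rightarrow> real) \<Rightarrow> nat \<Rightarrow> nat \<Rightarrow> real, S u i j = S^{ij}(u),
  indices i, j in 1..n.\<close>

definition mu :: "nat \<Rightarrow> nat \<Rightarrow> (nat \<Rightarrow> real) \<Rightarrow> nat \<Rightarrow> nat \<Rightarrow> real" where
  "mu n k u i j =
     (if i + j - 1 + k \<le> n
      then (3 * (real i + real j) - 2 * (real n + 2 - real k)) * u (i + j - 1 + k)
      else 0)"

definition gmet :: "nat \<Rightarrow> nat \<Rightarrow> nat \<Rightarrow> real" where
  "gmet n i j = (if i + j = n + 1 then 1 else 0)"

text \<open>Linear change of coordinates v^a = sum_i A a i u^i preserving g (tensorial law).\<close>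
definition orthogonal_g :: "nat \<Rightarrow> (nat \<Rightarrow> nat \<Rightarrow> real) \<Rightarrow> bool" where
  "orthogonal_g n A \<longleftrightarrow>
     (\<forall>a\<in>{1..n}. \<forall>b\<in>{1..n}.
        (\<Sum>i=1..n. \<Sum>j=1..n. A a i * A b j * gmet n i j) = gmet n a b)"

definition transforms_to ::
  "nat \<Rightarrow> (nat \<Rightarrow> nat \<Rightarrow> real) \<Rightarrow> ((nat \<Rightarrow> real) \<Rightarrow> nat \<Rightarrow> nat \<Rightarrow> real)
       \<Rightarrow> ((nat \<Rightarrow> real) \<Rightarrow> nat \<Rightarrow> nat \<Rightarrow> real) \<Rightarrow> bool" where
  "transforms_to n A S T \<longleftrightarrow>
     (\<forall>u. \<forall>a\<in>{1..n}. \<forall>b\<in>{1..n}.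
        T (\<lambda>c. \<Sum>i=1..n. A c i * u i) a b
          = (\<Sum>i=1..n. \<Sum>j=1..n. A a i * A b j * S u i j))"

end

theory Submission
  imports Defs "HOL-Computational_Algebra.Formal_Power_Series"
begin


lemma U_lemma:
  fixes A y :: real
  shows "(\<Sum>P=0..L. ((-1)^P * ((-A) gchoose P)) * ((y - A - 1 - of_nat P) gchoose (L - P)))
         = (y - 1) gchoose L"
proof -
  have "(\<Sum>P=0..L. ((-1)^P * ((-A) gchoose P)) * ((y - A - 1 - of_nat P) gchoose (L - P)))
      = (\<Sum>P=0..L. (-1)^L * (((-A) gchoose P) * ((of_nat L - y + A) gchoose (L - P))))"
  proof (rule sum.cong[OF refl])
    fix P assume P: "P \<in> {0..L}"
    have e: "of_nat (L - P) - (y - A - 1 - of_nat P) - 1 = (of_nat L - y + A :: real)"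
      using P by (simp add: of_nat_diff)
    have "(y - A - 1 - of_nat P) gchoose (L - P) = (-1)^(L-P) * ((of_nat L - y + A) gchoose (L - P))"
      by (subst gbinomial_negated_upper) (simp only: e)
    moreover have "(-1::real)^P * (-1)^(L-P) = (-1)^L"
      using P by (simp add: power_add[symmetric])
    ultimately show "((-1)^P * ((-A) gchoose P)) * ((y - A - 1 - of_nat P) gchoose (L - P))
      = (-1)^L * (((-A) gchoose P) * ((of_nat L - y + A) gchoose (L - P)))"
      by (metis (no_types, lifting) mult.assoc mult.left_commute)
  qed
  also have "\<dots> = (-1)^L * ((of_nat L - y) gchoose L)"
    by (simp add: sum_distrib_left[symmetric] gbinomial_Vandermonde)
  also have "\<dots> = (y - 1) gchoose L"
    by (subst (2) gbinomial_negated_upper) simp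
  finally show ?thesis .
qed

lemma W_aux:
  fixes A :: real
  shows "of_nat (Suc P) * ((-1)^Suc P * ((-A) gchoose Suc P)) = A * ((-1)^P * ((-(A+1)) gchoose P))"
proof -
  have e: "-(A+1) = -A - 1" by simp
  have ab: "of_nat (Suc P) * ((-A) gchoose Suc P) = (-A) * ((-(A+1)) gchoose P)"
    unfolding e by (rule gbinomial_absorption)
  have "of_nat (Suc P) * ((-1)^Suc P * ((-A) gchoose Suc P)) = (-1)^Suc P * (of_nat (Suc P) * ((-A) gchoose Suc P))"
    by (rule mult.left_commute)
  also have "\<dots> = (-1)^Suc P * ((-A) * ((-(A+1)) gchoose P))"
    by (simp only: ab)
  also have "\<dots> = A * ((-1)^P * ((-(A+1)) gchoose P))"
    by (simp only: power_Suc mult_minus_left mult_minus_right minus_minus mult_1_left mult.left_commute)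
  finally show ?thesis .
qed

lemma W_lemma:
  fixes A y :: real
  shows "(\<Sum>P=0..Suc L. of_nat P * ((-1)^P * ((-A) gchoose P)) * ((y - A - 1 - of_nat P) gchoose (Suc L - P)))
         = A * ((y - 1) gchoose L)"
proof -
  have "(\<Sum>P=0..Suc L. of_nat P * ((-1)^P * ((-A) gchoose P)) * ((y - A - 1 - of_nat P) gchoose (Suc L - P)))
    = (\<Sum>P=0..L. of_nat (Suc P) * ((-1)^Suc P * ((-A) gchoose Suc P)) * ((y - A - 1 - of_nat (Suc P)) gchoose (Suc L - Suc P)))"
    by (subst sum.atLeast0_atMost_Suc_shift) (simp only: of_nat_0 mult_zero_left add_0 o_def)
  also have "\<dots> = (\<Sum>P=0..L. A * (((-1)^P * ((-(A+1)) gchoose P)) * ((y - (A+1) - 1 - of_nat P) gchoose (L - P))))"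
  proof (rule sum.cong[OF refl])
    fix P
    have e2: "y - A - 1 - of_nat (Suc P) = y - (A+1) - 1 - of_nat P" by simp
    show "of_nat (Suc P) * ((-1)^Suc P * ((-A) gchoose Suc P)) * ((y - A - 1 - of_nat (Suc P)) gchoose (Suc L - Suc P))
      = A * (((-1)^P * ((-(A+1)) gchoose P)) * ((y - (A+1) - 1 - of_nat P) gchoose (L - P)))"
      by (simp only: W_aux e2 diff_Suc_Suc mult.assoc)
  qed
  also have "\<dots> = A * ((y - 1) gchoose L)"
    by (simp only: sum_distrib_left[symmetric] U_lemma)
  finally show ?thesis .
qed

lemma key_identity:
  fixes A y C r :: real
  assumes "C = 2*r*A - 3*r*y"
  shows "(\<Sum>P=0..L. ((-1)^P * ((-A) gchoose P)) * (C + 2 * of_nat P * r) * ((y - A - 1 - of_nat P) gchoose (L - P)))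
         = (C + 3 * of_nat L * r) * (y gchoose L)"
proof -
  have split: "(\<Sum>P=0..L. ((-1)^P * ((-A) gchoose P)) * (C + 2 * of_nat P * r) * ((y - A - 1 - of_nat P) gchoose (L - P)))
     = C * (\<Sum>P=0..L. ((-1)^P * ((-A) gchoose P)) * ((y - A - 1 - of_nat P) gchoose (L - P)))
       + 2 * r * (\<Sum>P=0..L. of_nat P * ((-1)^P * ((-A) gchoose P)) * ((y - A - 1 - of_nat P) gchoose (L - P)))"
    by (simp add: sum_distrib_left sum.distrib[symmetric] algebra_simps)
  show ?thesis
  proof (cases L)
    case 0
    then show ?thesis by simp
  next
    case (Suc L')
    have pas: "y gchoose Suc L' = ((y-1) gchoose Suc L') + ((y-1) gchoose L')"
      using gbinomial_Suc_Suc[of "y-1" L'] by simp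
    have abs: "of_nat (Suc L') * (y gchoose Suc L') = y * ((y-1) gchoose L')"
      by (rule gbinomial_absorption)
    have fin: "C * ((y-1) gchoose Suc L') + 2 * r * (A * ((y-1) gchoose L'))
        = (C + 3 * of_nat (Suc L') * r) * (y gchoose Suc L')"
    proof -
      have "(C + 3 * of_nat (Suc L') * r) * (y gchoose Suc L')
          = C * (y gchoose Suc L') + 3 * r * (of_nat (Suc L') * (y gchoose Suc L'))"
        by (simp add: algebra_simps)
      also have "\<dots> = C * ((y-1) gchoose Suc L') + C * ((y-1) gchoose L') + 3 * r * (y * ((y-1) gchoose L'))"
        apply (subst abs)
        apply (subst pas)
        by (simp add: algebra_simps)
      also have "\<dots> = C * ((y-1) gchoose Suc L') + 2 * r * (A * ((y-1) gchoose L'))"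
        by (simp add: assms algebra_simps)
      finally show ?thesis by simp
    qed
    show ?thesis
      apply (subst split)
      apply (simp only: Suc U_lemma W_lemma)
      by (rule fin)
  qed
qed



definition wv :: "nat \<Rightarrow> nat \<Rightarrow> nat \<Rightarrow> real" where
  "wv n r a = (real a - 1 - (real n - 1 - real r)/2) / real r"

definition gb :: "nat \<Rightarrow> nat \<Rightarrow> nat \<Rightarrow> nat \<Rightarrow> real" where
  "gb n r a p = (- wv n r a) gchoose p"

definition Em :: "nat \<Rightarrow> nat \<Rightarrow> real \<Rightarrow> nat \<Rightarrow> nat \<Rightarrow> real" where
  "Em n r z a i = (\<Sum>p\<le>n. if i = a + p*r then z^p * gb n r a p else 0)"

lemma Em_sum:
  assumes "1 \<le> a"
  shows "(\<Sum>i=1..n. Em n r z a i * f i) = (\<Sum>p\<le>n. if a + p*r \<le> n then z^p * gb n r a p * f (a+p*r) else 0)"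
proof -
  have "(\<Sum>i=1..n. Em n r z a i * f i) = (\<Sum>i=1..n. \<Sum>p\<le>n. if i = a + p*r then z^p * gb n r a p * f i else 0)"
    unfolding Em_def sum_distrib_right by (intro sum.cong refl) simp
  also have "\<dots> = (\<Sum>p\<le>n. \<Sum>i=1..n. if i = a + p*r then z^p * gb n r a p * f i else 0)"
    by (rule sum.swap)
  also have "\<dots> = (\<Sum>p\<le>n. if a + p*r \<le> n then z^p * gb n r a p * f (a+p*r) else 0)"
    using assms by (intro sum.cong refl) (simp add: sum.delta)
  finally show ?thesis .
qed

lemma tri:
  fixes h :: "nat \<Rightarrow> nat \<Rightarrow> real"
  assumes "\<And>p q. n < p + q \<Longrightarrow> h p q = 0"
  shows "(\<Sum>p\<le>n. \<Sum>q\<le>n. h p q) = (\<Sum>L\<le>n. \<Sum>p\<le>L. h p (L - p))"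
proof -
  have "(\<Sum>p\<le>n. \<Sum>q\<le>n. h p q) = (\<Sum>(p,q)\<in>{..n}\<times>{..n}. h p q)"
    by (simp add: sum.cartesian_product)
  also have "\<dots> = (\<Sum>(p,q)\<in>{(p,q). p+q \<le> n}. h p q)"
  proof (rule sum.mono_neutral_right)
    show "\<forall>i\<in>{..n} \<times> {..n} - {(p, q). p + q \<le> n}. (case i of (p, q) \<Rightarrow> h p q) = 0"
    proof
      fix i assume "i \<in> {..n} \<times> {..n} - {(p, q). p + q \<le> n}"
      then obtain p q where "i = (p,q)" "n < p + q" by auto
      then show "(case i of (p, q) \<Rightarrow> h p q) = 0" using assms by simp
    qed
  qed auto
  also have "\<dots> = (\<Sum>L\<le>n. \<Sum>p\<le>L. h p (L - p))"
    by (rule sum.triangle_reindex_eq)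
  finally show ?thesis .
qed

lemma gchoose_Lm1: "(of_nat L - 1 :: real) gchoose L = (if L = 0 then 1 else 0)"
proof (cases L)
  case 0 then show ?thesis by simp
next
  case (Suc L')
  have "(of_nat L - 1 :: real) = of_nat L'" using Suc by simp
  then have "(of_nat L - 1 :: real) gchoose L = of_nat (L' choose L)"
    by (simp add: binomial_gbinomial)
  then show ?thesis using Suc by simp
qed

lemma orth_Em:
  assumes r: "0 < r"
  shows "orthogonal_g n (Em n r z)"
  unfolding orthogonal_g_def
proof (intro ballI)
  fix a b assume a: "a \<in> {1..n}" and b: "b \<in> {1..n}"
  define h where "h p q = (if a + b + (p+q)*r = n+1 then z^(p+q) * (gb n r a p * gb n r b q) else 0)" for p q
  have "(\<Sum>i=1..n. \<Sum>j=1..n. Em n r z a i * Em n r z b j * gmet n i j)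
      = (\<Sum>i=1..n. Em n r z a i * (\<Sum>j=1..n. Em n r z b j * gmet n i j))"
    by (simp add: sum_distrib_left mult.assoc)
  also have "\<dots> = (\<Sum>p\<le>n. \<Sum>q\<le>n. h p q)"
  proof -
    have "(\<Sum>i=1..n. Em n r z a i * (\<Sum>j=1..n. Em n r z b j * gmet n i j))
       = (\<Sum>p\<le>n. if a + p*r \<le> n then z^p * gb n r a p * (\<Sum>q\<le>n. if b + q*r \<le> n then z^q * gb n r b q * gmet n (a+p*r) (b+q*r) else 0) else 0)"
    proof -
      have inner: "\<And>i. (\<Sum>j=1..n. Em n r z b j * gmet n i j) = (\<Sum>q\<le>n. if b + q*r \<le> n then z^q * gb n r b q * gmet n i (b+q*r) else 0)"
        by (rule Em_sum) (use b in auto)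
      show ?thesis unfolding inner by (rule Em_sum) (use a in auto)
    qed
    also have "\<dots> = (\<Sum>p\<le>n. \<Sum>q\<le>n. h p q)"
    proof (intro sum.cong refl)
      fix p assume "p \<in> {..n}"
      show "(if a + p*r \<le> n then z^p * gb n r a p * (\<Sum>q\<le>n. if b + q*r \<le> n then z^q * gb n r b q * gmet n (a+p*r) (b+q*r) else 0) else 0)
         = (\<Sum>q\<le>n. h p q)"
      proof (cases "a + p*r \<le> n")
        case True
        have "z^p * gb n r a p * (\<Sum>q\<le>n. if b + q*r \<le> n then z^q * gb n r b q * gmet n (a+p*r) (b+q*r) else 0)
          = (\<Sum>q\<le>n. h p q)"
          unfolding sum_distrib_left
        proof (intro sum.cong refl)
          fix q
          have e: "(a + p*r) + (b + q*r) = a + b + (p+q)*r" by (simp add: add_mult_distrib)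
          show "z^p * gb n r a p * (if b + q*r \<le> n then z^q * gb n r b q * gmet n (a+p*r) (b+q*r) else 0) = h p q"
          proof -
            have f: "a + b + (p+q)*r = n+1 \<Longrightarrow> b + q*r \<le> n" using a by (simp add: add_mult_distrib)
            show ?thesis unfolding h_def gmet_def e using f by (auto simp: power_add)
          qed
        qed
        then show ?thesis using True by simp
      next
        case False
        then show ?thesis unfolding h_def using b by (auto intro!: sum.neutral simp: add_mult_distrib)
      qed
    qed
    finally show ?thesis .
  qed
  also have "\<dots> = (\<Sum>L\<le>n. \<Sum>p\<le>L. h p (L - p))"
  proof (rule tri)
    fix p q assume "n < p + q"
    moreover have "p + q \<le> (p+q)*r" using r by simp
    ultimately have "n < (p+q)*r" by linarith
    then show "h p q = 0" using a b unfolding h_def by auto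
  qed
  also have "\<dots> = (\<Sum>L\<le>n. if L = 0 then gmet n a b else 0)"
  proof (intro sum.cong refl)
    fix L assume "L \<in> {..n}"
    show "(\<Sum>p\<le>L. h p (L - p)) = (if L = 0 then gmet n a b else 0)"
    proof (cases "a + b + L*r = n+1")
      case True
      have y: "- wv n r a - wv n r b = real L - 1"
      proof -
        have e: "real n + 1 - real a - real b = real L * real r"
          using True by (simp add: of_nat_add[symmetric] of_nat_mult[symmetric] del: of_nat_add of_nat_mult)
        have "- wv n r a - wv n r b = (real n + 1 - real a - real b - real r) / real r"
          unfolding wv_def using r by (simp add: field_simps)
        also have "\<dots> = real L - 1" unfolding e using r by (simp add: field_simps)
        finally show ?thesis .
      qed
      have "(\<Sum>p\<le>L. h p (L - p)) = z^L * (\<Sum>p=0..L. gb n r a p * gb n r b (L - p))"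
        unfolding h_def sum_distrib_left atLeast0AtMost using True by (intro sum.cong refl) auto
      also have "\<dots> = z^L * ((real L - 1) gchoose L)"
      proof -
        have y': "- wv n r a + - wv n r b = real L - 1" using y by simp
        show ?thesis by (simp only: gb_def gbinomial_Vandermonde y')
      qed
      also have "\<dots> = (if L = 0 then gmet n a b else 0)"
        using True by (cases "L = 0") (auto simp add: gchoose_Lm1 gmet_def)
      finally show ?thesis .
    next
      case False
      then show ?thesis unfolding h_def gmet_def by auto
    qed
  qed
  also have "\<dots> = gmet n a b" by (simp add: sum.delta')
  finally show "(\<Sum>i=1..n. \<Sum>j=1..n. Em n r z a i * Em n r z b j * gmet n i j) = gmet n a b" .
qed



definition Aco :: "nat \<Rightarrow> nat \<Rightarrow> nat \<Rightarrow> real" where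
  "Aco n r k = (real n - 1 + 2*real k - 3*real r)/(2*real r)"

definition ell :: "nat \<Rightarrow> nat \<Rightarrow> nat \<Rightarrow> nat \<Rightarrow> real" where
  "ell n r k P = (-1)^P * ((-(Aco n r k)) gchoose P)"

lemma act_Em:
  assumes r: "0 < r"
  shows "transforms_to n (Em n r z) (mu n k)
           (\<lambda>u a b. \<Sum>P\<le>n. z^P * ell n r k P * mu n (k+P*r) u a b)"
  unfolding transforms_to_def
proof (intro allI ballI)
  fix u :: "nat \<Rightarrow> real" and a b assume a: "a \<in> {1..n}" and b: "b \<in> {1..n}"
  define v where "v c = (\<Sum>i=1..n. Em n r z c i * u i)" for c
  define X where "X L = a + b - 1 + k + L*r" for L
  define C where "C = 3 * (real a + real b) - 2 * (real n + 2 - real k)"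
  define A where "A = Aco n r k"
  define y where "y = - wv n r a - wv n r b"
  define h1 where "h1 P Q = (if X (P+Q) \<le> n then z^(P+Q) * (ell n r k P * (C + 2 * real P * real r) * gb n r (a + b - 1 + (k + P*r)) Q) * u (X (P+Q)) else 0)" for P Q
  define h2 where "h2 p q = (if X (p+q) \<le> n then z^(p+q) * ((C + 3 * real (p+q) * real r) * (gb n r a p * gb n r b q)) * u (X (p+q)) else 0)" for p q
  have ab1: "1 \<le> a" "1 \<le> b" using a b by auto
  have Xs: "X (P+Q) = a + b - 1 + (k + P*r) + Q*r" for P Q
    unfolding X_def by (simp add: add_mult_distrib)
  have Xs2: "X (p+q) = (a + p*r) + (b + q*r) - 1 + k" for p q
    unfolding X_def using ab1 by (simp add: add_mult_distrib)
  have L1: "(\<Sum>P\<le>n. z^P * ell n r k P * mu n (k+P*r) v a b) = (\<Sum>P\<le>n. \<Sum>Q\<le>n. h1 P Q)"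
  proof (intro sum.cong refl)
    fix P
    have ve: "v (a + b - 1 + (k + P*r)) = (\<Sum>Q\<le>n. if a + b - 1 + (k + P*r) + Q*r \<le> n then z^Q * gb n r (a + b - 1 + (k + P*r)) Q * u (a + b - 1 + (k + P*r) + Q*r) else 0)"
      unfolding v_def by (rule Em_sum) (use ab1 in auto)
    have co: "3 * (real a + real b) - 2 * (real n + 2 - real (k + P*r)) = C + 2 * real P * real r"
      unfolding C_def by (simp add: algebra_simps)
    show "z^P * ell n r k P * mu n (k+P*r) v a b = (\<Sum>Q\<le>n. h1 P Q)"
    proof (cases "a + b - 1 + (k + P*r) \<le> n")
      case True
      have m: "mu n (k+P*r) v a b = (C + 2 * real P * real r) * v (a + b - 1 + (k + P*r))"
        unfolding mu_def co using True by simp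
      show ?thesis
        unfolding m ve sum_distrib_left h1_def Xs
        by (intro sum.cong refl) (auto simp: power_add algebra_simps)
    next
      case False
      then show ?thesis unfolding mu_def h1_def Xs by (auto intro!: sum.neutral)
    qed
  qed
  have L2: "(\<Sum>P\<le>n. \<Sum>Q\<le>n. h1 P Q) = (\<Sum>L\<le>n. \<Sum>P\<le>L. h1 P (L - P))"
  proof (rule tri)
    fix p q assume "n < p + q"
    moreover have "p + q \<le> (p+q)*r" using r by simp
    ultimately have "n < X (p+q)" unfolding X_def by linarith
    then show "h1 p q = 0" unfolding h1_def by simp
  qed
  have R1: "(\<Sum>i=1..n. \<Sum>j=1..n. Em n r z a i * Em n r z b j * mu n k u i j) = (\<Sum>p\<le>n. \<Sum>q\<le>n. h2 p q)"
  proof -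
    have "(\<Sum>i=1..n. \<Sum>j=1..n. Em n r z a i * Em n r z b j * mu n k u i j)
      = (\<Sum>i=1..n. Em n r z a i * (\<Sum>j=1..n. Em n r z b j * mu n k u i j))"
      by (simp add: sum_distrib_left mult.assoc)
    also have "\<dots> = (\<Sum>p\<le>n. if a + p*r \<le> n then z^p * gb n r a p * (\<Sum>q\<le>n. if b + q*r \<le> n then z^q * gb n r b q * mu n k u (a+p*r) (b+q*r) else 0) else 0)"
    proof -
      have inner: "\<And>i. (\<Sum>j=1..n. Em n r z b j * mu n k u i j) = (\<Sum>q\<le>n. if b + q*r \<le> n then z^q * gb n r b q * mu n k u i (b+q*r) else 0)"
        by (rule Em_sum) (use ab1 in auto)
      show ?thesis unfolding inner by (rule Em_sum) (use ab1 in auto)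
    qed
    also have "\<dots> = (\<Sum>p\<le>n. \<Sum>q\<le>n. h2 p q)"
    proof (intro sum.cong refl)
      fix p
      show "(if a + p*r \<le> n then z^p * gb n r a p * (\<Sum>q\<le>n. if b + q*r \<le> n then z^q * gb n r b q * mu n k u (a+p*r) (b+q*r) else 0) else 0)
         = (\<Sum>q\<le>n. h2 p q)"
      proof (cases "a + p*r \<le> n")
        case True
        have "z^p * gb n r a p * (\<Sum>q\<le>n. if b + q*r \<le> n then z^q * gb n r b q * mu n k u (a+p*r) (b+q*r) else 0)
          = (\<Sum>q\<le>n. h2 p q)"
          unfolding sum_distrib_left
        proof (intro sum.cong refl)
          fix q
          have co: "3 * (real (a + p*r) + real (b + q*r)) - 2 * (real n + 2 - real k) = C + 3 * real (p+q) * real r"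
            unfolding C_def by (simp add: algebra_simps)
          have f: "X (p+q) \<le> n \<Longrightarrow> b + q*r \<le> n" unfolding X_def using ab1 by (simp add: add_mult_distrib)
          show "z^p * gb n r a p * (if b + q*r \<le> n then z^q * gb n r b q * mu n k u (a+p*r) (b+q*r) else 0) = h2 p q"
            unfolding h2_def mu_def co Xs2[symmetric] using f by (auto simp: power_add algebra_simps)
        qed
        then show ?thesis using True by simp
      next
        case False
        have nq: "\<not> X (p+q) \<le> n" for q using False ab1 unfolding X_def by (simp add: add_mult_distrib)
        show ?thesis using False unfolding h2_def by (simp only: nq if_False) simp
      qed
    qed
    finally show ?thesis .
  qed
  have R2: "(\<Sum>p\<le>n. \<Sum>q\<le>n. h2 p q) = (\<Sum>L\<le>n. \<Sum>p\<le>L. h2 p (L - p))"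
  proof (rule tri)
    fix p q assume "n < p + q"
    moreover have "p + q \<le> (p+q)*r" using r by simp
    ultimately have "n < X (p+q)" unfolding X_def by linarith
    then show "h2 p q = 0" unfolding h2_def by simp
  qed
  have M: "(\<Sum>P\<le>L. h1 P (L - P)) = (\<Sum>p\<le>L. h2 p (L - p))" for L
  proof (cases "X L \<le> n")
    case False
    then show ?thesis unfolding h1_def h2_def by (auto intro!: sum.neutral)
  next
    case True
    have CA: "C = 2 * real r * A - 3 * real r * y"
      unfolding C_def A_def y_def Aco_def wv_def using r by (simp add: field_simps)
    have W: "gb n r (a + b - Suc 0 + (k + P*r)) Q = (y - A - 1 - real P) gchoose Q" for P Q
    proof -
      have "real (a + b - Suc 0 + (k + P*r)) = real a + real b - 1 + real k + real P * real r"
        using ab1 by (simp add: of_nat_diff)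
      then have "- wv n r (a + b - Suc 0 + (k + P*r)) = y - A - 1 - real P"
        unfolding y_def A_def Aco_def wv_def using r by (simp add: field_simps)
      then show ?thesis unfolding gb_def by simp
    qed
    have lhs: "(\<Sum>P\<le>L. h1 P (L - P)) = z^L * (\<Sum>P=0..L. ((-1)^P * ((-A) gchoose P)) * (C + 2 * of_nat P * real r) * ((y - A - 1 - of_nat P) gchoose (L - P))) * u (X L)"
      unfolding sum_distrib_left sum_distrib_right atLeast0AtMost h1_def
      using True by (intro sum.cong refl) (auto simp: W ell_def A_def[symmetric])
    have V: "(\<Sum>p=0..L. gb n r a p * gb n r b (L - p)) = y gchoose L"
    proof -
      have y': "y = - wv n r a + - wv n r b" unfolding y_def by simp
      show ?thesis unfolding y' by (simp only: gb_def gbinomial_Vandermonde)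
    qed
    have rhs: "(\<Sum>p\<le>L. h2 p (L - p)) = z^L * ((C + 3 * of_nat L * real r) * (\<Sum>p=0..L. gb n r a p * gb n r b (L - p))) * u (X L)"
      unfolding sum_distrib_left sum_distrib_right atLeast0AtMost h2_def
      using True by (intro sum.cong refl) (auto simp: algebra_simps)
    show ?thesis unfolding lhs rhs V key_identity[OF CA] ..
  qed
  show "(\<Sum>P\<le>n. z^P * ell n r k P * mu n (k+P*r) v a b) = (\<Sum>i=1..n. \<Sum>j=1..n. Em n r z a i * Em n r z b j * mu n k u i j)"
    unfolding L1 L2 R1 R2 M ..
qed



definition bil :: "nat \<Rightarrow> (nat \<Rightarrow> nat \<Rightarrow> real) \<Rightarrow> (nat \<Rightarrow> nat \<Rightarrow> real) \<Rightarrow> nat \<Rightarrow> nat \<Rightarrow> real" where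
  "bil n X M a b = (\<Sum>i=1..n. \<Sum>j=1..n. X a i * X b j * M i j)"

definition mprod :: "nat \<Rightarrow> (nat \<Rightarrow> nat \<Rightarrow> real) \<Rightarrow> (nat \<Rightarrow> nat \<Rightarrow> real) \<Rightarrow> nat \<Rightarrow> nat \<Rightarrow> real" where
  "mprod n B A c i = (\<Sum>l=1..n. B c l * A l i)"

lemma prod3: "(\<Sum>a'\<in>I. x a' * y a') * (\<Sum>b'\<in>I. z b' * w b') * (m::real) = (\<Sum>a'\<in>I. \<Sum>b'\<in>I. x a' * z b' * (y a' * w b' * m))"
proof -
  have "(\<Sum>a'\<in>I. x a' * y a') * (\<Sum>b'\<in>I. z b' * w b') * m = (\<Sum>a'\<in>I. \<Sum>b'\<in>I. (x a' * y a') * (z b' * w b') * m)"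
    by (simp only: sum_product, simp only: sum_distrib_right)
  also have "\<dots> = (\<Sum>a'\<in>I. \<Sum>b'\<in>I. x a' * z b' * (y a' * w b' * m))"
    by (rule sum.cong[OF refl], rule sum.cong[OF refl], simp only: mult_ac)
  finally show ?thesis .
qed

lemma bil_comp: "bil n (mprod n B A) M a b = bil n B (\<lambda>a' b'. bil n A M a' b') a b"
proof -
  have "bil n (mprod n B A) M a b
      = (\<Sum>i=1..n. \<Sum>j=1..n. \<Sum>a'=1..n. \<Sum>b'=1..n. B a a' * B b b' * (A a' i * A b' j * M i j))"
    unfolding bil_def mprod_def prod3 ..
  also have "\<dots> = (\<Sum>i=1..n. \<Sum>a'=1..n. \<Sum>j=1..n. \<Sum>b'=1..n. B a a' * B b b' * (A a' i * A b' j * M i j))"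
    by (rule sum.cong[OF refl], rule sum.swap)
  also have "\<dots> = (\<Sum>i=1..n. \<Sum>a'=1..n. \<Sum>b'=1..n. \<Sum>j=1..n. B a a' * B b b' * (A a' i * A b' j * M i j))"
    by (rule sum.cong[OF refl], rule sum.cong[OF refl], rule sum.swap)
  also have "\<dots> = (\<Sum>a'=1..n. \<Sum>i=1..n. \<Sum>b'=1..n. \<Sum>j=1..n. B a a' * B b b' * (A a' i * A b' j * M i j))"
    by (rule sum.swap)
  also have "\<dots> = (\<Sum>a'=1..n. \<Sum>b'=1..n. \<Sum>i=1..n. \<Sum>j=1..n. B a a' * B b b' * (A a' i * A b' j * M i j))"
    by (rule sum.cong[OF refl], rule sum.swap)
  also have "\<dots> = bil n B (\<lambda>a' b'. bil n A M a' b') a b"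
    unfolding bil_def by (simp add: sum_distrib_left)
  finally show ?thesis .
qed

lemma orth_bil: "orthogonal_g n A \<longleftrightarrow> (\<forall>a\<in>{1..n}. \<forall>b\<in>{1..n}. bil n A (gmet n) a b = gmet n a b)"
  unfolding orthogonal_g_def bil_def ..

lemma trans_bil: "transforms_to n A S T \<longleftrightarrow>
   (\<forall>u. \<forall>a\<in>{1..n}. \<forall>b\<in>{1..n}. T (\<lambda>c. \<Sum>i=1..n. A c i * u i) a b = bil n A (S u) a b)"
  unfolding transforms_to_def bil_def ..

lemma bil_cong: "(\<And>i j. i \<in> {1..n} \<Longrightarrow> j \<in> {1..n} \<Longrightarrow> M i j = M' i j) \<Longrightarrow> bil n X M a b = bil n X M' a b"
  unfolding bil_def by (intro sum.cong refl) simp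

lemma orth_comp:
  assumes "orthogonal_g n A" "orthogonal_g n B"
  shows "orthogonal_g n (mprod n B A)"
  unfolding orth_bil
proof (intro ballI)
  fix a b assume a: "a \<in> {1..n}" and b: "b \<in> {1..n}"
  have "bil n (mprod n B A) (gmet n) a b = bil n B (\<lambda>a' b'. bil n A (gmet n) a' b') a b"
    by (rule bil_comp)
  also have "\<dots> = bil n B (gmet n) a b"
    using assms(1) unfolding orth_bil by (intro bil_cong) auto
  also have "\<dots> = gmet n a b" using assms(2) a b unfolding orth_bil by auto
  finally show "bil n (mprod n B A) (gmet n) a b = gmet n a b" .
qed

lemma apply_comp: "(\<lambda>c. \<Sum>i=1..n. mprod n B A c i * u i) = (\<lambda>c. \<Sum>l=1..n. B c l * (\<Sum>i=1..n. A l i * u i))"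
proof
  fix c
  show "(\<Sum>i=1..n. mprod n B A c i * u i) = (\<Sum>l=1..n. B c l * (\<Sum>i=1..n. A l i * u i))"
  proof -
    have "(\<Sum>i=1..n. mprod n B A c i * u i) = (\<Sum>i=1..n. \<Sum>l=1..n. B c l * (A l i * u i))"
      unfolding mprod_def sum_distrib_right by (simp only: mult.assoc)
    also have "\<dots> = (\<Sum>l=1..n. \<Sum>i=1..n. B c l * (A l i * u i))" by (rule sum.swap)
    also have "\<dots> = (\<Sum>l=1..n. B c l * (\<Sum>i=1..n. A l i * u i))" by (simp only: sum_distrib_left)
    finally show ?thesis .
  qed
qed

lemma trans_comp:
  assumes "transforms_to n A S T" "transforms_to n B T R"
  shows "transforms_to n (mprod n B A) S R"
  unfolding trans_bil
proof (intro allI ballI)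
  fix u a b assume a: "a \<in> {1..n}" and b: "b \<in> {1..n}"
  have "R (\<lambda>c. \<Sum>i=1..n. mprod n B A c i * u i) a b = R (\<lambda>c. \<Sum>l=1..n. B c l * (\<Sum>i=1..n. A l i * u i)) a b"
    by (simp only: apply_comp)
  also have "\<dots> = bil n B (T (\<lambda>c. \<Sum>i=1..n. A c i * u i)) a b"
  proof -
    from assms(2) have "\<forall>u. \<forall>a\<in>{1..n}. \<forall>b\<in>{1..n}. R (\<lambda>c. \<Sum>i=1..n. B c i * u i) a b = bil n B (T u) a b"
      by (simp only: trans_bil)
    then have "\<forall>a\<in>{1..n}. \<forall>b\<in>{1..n}. R (\<lambda>c. \<Sum>l=1..n. B c l * (\<lambda>l. \<Sum>i=1..n. A l i * u i) l) a b = bil n B (T (\<lambda>l. \<Sum>i=1..n. A l i * u i)) a b"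
      by (rule spec)
    then show ?thesis using a b by simp
  qed
  also have "\<dots> = bil n B (\<lambda>a' b'. bil n A (S u) a' b') a b"
    using assms(1) unfolding trans_bil by (intro bil_cong) auto
  also have "\<dots> = bil n (mprod n B A) (S u) a b" by (rule bil_comp[symmetric])
  finally show "R (\<lambda>c. \<Sum>i=1..n. mprod n B A c i * u i) a b = bil n (mprod n B A) (S u) a b" .
qed

lemma trans_congT:
  assumes "transforms_to n A S T" "\<And>u a b. a \<in> {1..n} \<Longrightarrow> b \<in> {1..n} \<Longrightarrow> T u a b = T' u a b"
  shows "transforms_to n A S T'"
  using assms unfolding transforms_to_def by auto

lemma trans_congS:
  assumes "transforms_to n A S T" "\<And>u a b. a \<in> {1..n} \<Longrightarrow> b \<in> {1..n} \<Longrightarrow> S u a b = S' u a b"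
  shows "transforms_to n A S' T"
  unfolding trans_bil
proof (intro allI ballI)
  fix u a b assume a: "a \<in> {1..n}" and b: "b \<in> {1..n}"
  have "T (\<lambda>c. \<Sum>i=1..n. A c i * u i) a b = bil n A (S u) a b" using assms(1) a b unfolding trans_bil by blast
  also have "\<dots> = bil n A (S' u) a b" using assms(2) by (intro bil_cong) auto
  finally show "T (\<lambda>c. \<Sum>i=1..n. A c i * u i) a b = bil n A (S' u) a b" .
qed

lemma trans_lin:
  assumes "finite K" "\<And>k. k \<in> K \<Longrightarrow> transforms_to n A (S k) (T k)"
  shows "transforms_to n A (\<lambda>u i j. \<Sum>k\<in>K. c k * S k u i j) (\<lambda>u i j. \<Sum>k\<in>K. c k * T k u i j)"
  unfolding transforms_to_def
proof (intro allI ballI)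
  fix u a b assume a: "a \<in> {1..n}" and b: "b \<in> {1..n}"
  have "(\<Sum>k\<in>K. c k * T k (\<lambda>c. \<Sum>i=1..n. A c i * u i) a b)
     = (\<Sum>k\<in>K. c k * (\<Sum>i=1..n. \<Sum>j=1..n. A a i * A b j * S k u i j))"
    using assms(2) a b unfolding transforms_to_def by (intro sum.cong refl) auto
  also have "\<dots> = (\<Sum>i=1..n. \<Sum>j=1..n. A a i * A b j * (\<Sum>k\<in>K. c k * S k u i j))"
  proof -
    have "(\<Sum>k\<in>K. c k * (\<Sum>i=1..n. \<Sum>j=1..n. A a i * A b j * S k u i j))
      = (\<Sum>k\<in>K. \<Sum>i=1..n. \<Sum>j=1..n. c k * (A a i * A b j * S k u i j))"
      by (simp only: sum_distrib_left)
    also have "\<dots> = (\<Sum>i=1..n. \<Sum>k\<in>K. \<Sum>j=1..n. c k * (A a i * A b j * S k u i j))"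
      by (rule sum.swap)
    also have "\<dots> = (\<Sum>i=1..n. \<Sum>j=1..n. \<Sum>k\<in>K. c k * (A a i * A b j * S k u i j))"
      by (rule sum.cong[OF refl], rule sum.swap)
    also have "\<dots> = (\<Sum>i=1..n. \<Sum>j=1..n. A a i * A b j * (\<Sum>k\<in>K. c k * S k u i j))"
      by (rule sum.cong[OF refl], rule sum.cong[OF refl], simp only: sum_distrib_left mult_ac)
    finally show ?thesis .
  qed
  finally show "(\<Sum>k\<in>K. c k * T k (\<lambda>c. \<Sum>i=1..n. A c i * u i) a b)
     = (\<Sum>i=1..n. \<Sum>j=1..n. A a i * A b j * (\<Sum>k\<in>K. c k * S k u i j))" .
qed



definition Dg :: "real \<Rightarrow> real \<Rightarrow> nat \<Rightarrow> nat \<Rightarrow> real" where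
  "Dg \<rho> \<tau> a i = (if a = i then \<rho> * \<tau>^(a-1) else 0)"

lemma Dg_apply: "a \<in> {1..n} \<Longrightarrow> (\<Sum>i=1..n. Dg \<rho> \<tau> a i * f i) = \<rho> * \<tau>^(a-1) * f a"
proof -
  assume a: "a \<in> {1..n}"
  have "(\<Sum>i=1..n. Dg \<rho> \<tau> a i * f i) = (\<Sum>i=1..n. if a = i then \<rho> * \<tau>^(a-1) * f i else 0)"
    unfolding Dg_def by (intro sum.cong refl) auto
  also have "\<dots> = \<rho> * \<tau>^(a-1) * f a" using a by (subst sum.delta') auto
  finally show ?thesis .
qed

lemma bil_Dg: "a \<in> {1..n} \<Longrightarrow> b \<in> {1..n} \<Longrightarrow> bil n (Dg \<rho> \<tau>) M a b = \<rho> * \<tau>^(a-1) * (\<rho> * \<tau>^(b-1) * M a b)"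
proof -
  assume a: "a \<in> {1..n}" and b: "b \<in> {1..n}"
  have "bil n (Dg \<rho> \<tau>) M a b = (\<Sum>i=1..n. Dg \<rho> \<tau> a i * (\<Sum>j=1..n. Dg \<rho> \<tau> b j * M i j))"
    unfolding bil_def by (simp add: sum_distrib_left mult.assoc)
  also have "\<dots> = (\<Sum>i=1..n. Dg \<rho> \<tau> a i * (\<rho> * \<tau>^(b-1) * M i b))"
    using b by (simp only: Dg_apply)
  also have "\<dots> = \<rho> * \<tau>^(a-1) * (\<rho> * \<tau>^(b-1) * M a b)"
    using a by (rule Dg_apply)
  finally show ?thesis .
qed

lemma orth_Dg:
  assumes "\<rho>^2 * \<tau>^(n-1) = 1"
  shows "orthogonal_g n (Dg \<rho> \<tau>)"
  unfolding orth_bil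
proof (intro ballI)
  fix a b assume a: "a \<in> {1..n}" and b: "b \<in> {1..n}"
  show "bil n (Dg \<rho> \<tau>) (gmet n) a b = gmet n a b"
  proof (cases "a + b = n + 1")
    case True
    then have "(a - 1) + (b - 1) = n - 1" using a b by auto
    then have "\<tau>^(a-1) * \<tau>^(b-1) = \<tau>^(n-1)" by (metis power_add)
    then have "\<rho> * \<tau>^(a-1) * (\<rho> * \<tau>^(b-1)) = 1" using assms by (simp add: power2_eq_square mult_ac)
    then show ?thesis using a b True by (simp add: bil_Dg gmet_def)
  next
    case False
    then show ?thesis using a b by (simp add: bil_Dg gmet_def)
  qed
qed

lemma trans_Dg:
  assumes "\<tau> \<noteq> 0"
  shows "transforms_to n (Dg \<rho> \<tau>) (mu n k) (\<lambda>u i j. (\<rho> / \<tau>^k) * mu n k u i j)"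
  unfolding trans_bil
proof (intro allI ballI)
  fix u a b assume a: "a \<in> {1..n}" and b: "b \<in> {1..n}"
  show "\<rho> / \<tau>^k * mu n k (\<lambda>c. \<Sum>i=1..n. Dg \<rho> \<tau> c i * u i) a b = bil n (Dg \<rho> \<tau>) (mu n k u) a b"
  proof (cases "a + b - 1 + k \<le> n")
    case True
    have e: "a + b - 1 + k \<in> {1..n}" using True a b by auto
    have p: "\<tau>^(a + b - 1 + k - 1) = \<tau>^(a-1) * \<tau>^(b-1) * \<tau>^k"
    proof -
      have "a + b - 1 + k - 1 = (a-1) + (b-1) + k" using a b by auto
      then show ?thesis by (simp add: power_add)
    qed
    show ?thesis unfolding bil_Dg[OF a b] mu_def using True Dg_apply[OF e] p assms
      by (simp add: field_simps)
  next
    case False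
    then show ?thesis unfolding bil_Dg[OF a b] mu_def by simp
  qed
qed

definition Sc :: "nat \<Rightarrow> (nat \<Rightarrow> real) \<Rightarrow> (nat \<Rightarrow> real) \<Rightarrow> nat \<Rightarrow> nat \<Rightarrow> real" where
  "Sc n c = (\<lambda>u i j. \<Sum>k\<le>n. c k * mu n k u i j)"

lemma mu_big: "a \<in> {1..n} \<Longrightarrow> b \<in> {1..n} \<Longrightarrow> n < k \<Longrightarrow> mu n k u a b = 0"
  unfolding mu_def by auto

lemma mu_n: "a \<in> {1..n} \<Longrightarrow> b \<in> {1..n} \<Longrightarrow> mu n n u a b = 0"
  unfolding mu_def by auto

lemma ell0: "ell n r k 0 = 1" unfolding ell_def by simp
lemma ell1: "ell n r k (Suc 0) = Aco n r k" unfolding ell_def by simp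

lemma dsum2:
  fixes n p q :: nat
  assumes "p \<le> n" "q \<le> n"
  shows "(\<Sum>k\<le>n. \<Sum>P\<le>n. if P = p \<and> k = q then F k P else (0::real)) = F q p"
proof -
  have "(\<Sum>k\<le>n. \<Sum>P\<le>n. if P = p \<and> k = q then F k P else (0::real)) = (\<Sum>k\<le>n. if k = q then F k p else 0)"
  proof (intro sum.cong refl)
    fix k
    show "(\<Sum>P\<le>n. if P = p \<and> k = q then F k P else 0) = (if k = q then F k p else 0)"
    proof (cases "k = q")
      case True
      then show ?thesis using assms by simp
    next
      case False
      then show ?thesis by simp
    qed
  qed
  also have "\<dots> = F q p" using assms by (subst sum.delta) auto
  finally show ?thesis .
qed

lemma step:
  assumes r: "0 < r" "r \<le> n" and nr: "3*r + 1 \<noteq> n" and c0: "c 0 = 1"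
  shows "\<exists>A d. orthogonal_g n A \<and> transforms_to n A (Sc n c) (Sc n d) \<and> (\<forall>j<r. d j = c j) \<and> d r = 0"
proof -
  define z where "z = - c r / Aco n r 0"
  define F where "F k P = c k * (z^P * ell n r k P)" for k P
  define d where "d j = (\<Sum>k\<le>n. \<Sum>P\<le>n. if k + P*r = j then F k P else 0)" for j
  have Aco0: "Aco n r 0 \<noteq> 0"
  proof
    assume "Aco n r 0 = 0"
    then have "real n - 1 - 3 * real r = 0" unfolding Aco_def using r by simp
    then have "real n = real (3*r + 1)" by simp
    then show False using nr by (simp only: of_nat_eq_iff)
  qed
  have T1: "transforms_to n (Em n r z) (Sc n c)
     (\<lambda>u i j. \<Sum>k\<le>n. c k * (\<Sum>P\<le>n. z^P * ell n r k P * mu n (k+P*r) u i j))"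
    unfolding Sc_def by (rule trans_lin[OF finite_atMost act_Em[OF r(1)]])
  have T2: "transforms_to n (Em n r z) (Sc n c) (Sc n d)"
  proof (rule trans_congT[OF T1])
    fix u a b assume a: "a \<in> {1..n}" and b: "b \<in> {1..n}"
    have "Sc n d u a b = (\<Sum>j\<le>n. \<Sum>k\<le>n. \<Sum>P\<le>n. (if k + P*r = j then F k P else 0) * mu n j u a b)"
      unfolding Sc_def d_def by (simp add: sum_distrib_right)
    also have "\<dots> = (\<Sum>k\<le>n. \<Sum>P\<le>n. \<Sum>j\<le>n. (if k + P*r = j then F k P else 0) * mu n j u a b)"
      by (subst sum.swap, rule sum.cong[OF refl], rule sum.swap)
    also have "\<dots> = (\<Sum>k\<le>n. \<Sum>P\<le>n. F k P * mu n (k + P*r) u a b)"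
    proof (intro sum.cong refl)
      fix k P
      show "(\<Sum>j\<le>n. (if k + P*r = j then F k P else 0) * mu n j u a b) = F k P * mu n (k + P*r) u a b"
      proof -
        have "(\<Sum>j\<le>n. (if k + P*r = j then F k P else 0) * mu n j u a b) = (\<Sum>j\<le>n. if k + P*r = j then F k P * mu n j u a b else 0)"
          by (intro sum.cong refl) auto
        also have "\<dots> = F k P * mu n (k + P*r) u a b"
          using mu_big[OF a b, of "k+P*r" u] by (subst sum.delta') auto
        finally show ?thesis .
      qed
    qed
    also have "\<dots> = (\<Sum>k\<le>n. c k * (\<Sum>P\<le>n. z^P * ell n r k P * mu n (k+P*r) u a b))"
      unfolding F_def by (simp add: sum_distrib_left mult_ac)
    finally show "(\<Sum>k\<le>n. c k * (\<Sum>P\<le>n. z^P * ell n r k P * mu n (k+P*r) u a b)) = Sc n d u a b" by simp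
  qed
  have D1: "d j = c j" if j: "j < r" for j
  proof -
    have "d j = (\<Sum>k\<le>n. \<Sum>P\<le>n. if P = 0 \<and> k = j then F k P else 0)"
      unfolding d_def
    proof (intro sum.cong refl)
      fix k P
      have "k + P*r = j \<longleftrightarrow> P = 0 \<and> k = j"
      proof
        assume h: "k + P*r = j"
        have "P = 0"
        proof (rule ccontr)
          assume "P \<noteq> 0" then have "r \<le> P*r" by simp
          then show False using h j by linarith
        qed
        then show "P = 0 \<and> k = j" using h by simp
      qed auto
      then show "(if k + P*r = j then F k P else 0) = (if P = 0 \<and> k = j then F k P else 0)" by simp
    qed
    also have "\<dots> = F j 0" using j r by (intro dsum2) auto
    finally show ?thesis unfolding F_def by (simp add: ell0)
  qed
  have D2: "d r = 0"
  proof -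
    have "d r = (\<Sum>k\<le>n. \<Sum>P\<le>n. (if P = 0 \<and> k = r then F k P else 0) + (if P = 1 \<and> k = 0 then F k P else 0))"
      unfolding d_def
    proof (intro sum.cong refl)
      fix k P
      have "k + P*r = r \<longleftrightarrow> (P = 0 \<and> k = r) \<or> (P = 1 \<and> k = 0)"
      proof
        assume h: "k + P*r = r"
        have "P \<le> 1"
        proof (rule ccontr)
          assume "\<not> P \<le> 1" then have "2*r \<le> P*r" by simp
          then show False using h r by linarith
        qed
        then show "(P = 0 \<and> k = r) \<or> (P = 1 \<and> k = 0)" using h r
          by (cases P) auto
      qed auto
      then show "(if k + P*r = r then F k P else 0) = (if P = 0 \<and> k = r then F k P else 0) + (if P = 1 \<and> k = 0 then F k P else 0)"
        using r by auto
    qed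
    also have "\<dots> = F r 0 + F 0 1"
      using r by (simp add: sum.distrib dsum2)
    also have "\<dots> = 0"
      unfolding F_def z_def using Aco0 c0 by (simp add: ell0 ell1)
    finally show ?thesis .
  qed
  show ?thesis using orth_Em[OF r(1)] T2 D1 D2 by blast
qed

lemma iter:
  assumes c0: "c 0 = 1" and A0: "orthogonal_g n A0" "transforms_to n A0 S (Sc n c)"
    and ex: "\<And>r. 3*r + 1 = n \<Longrightarrow> r = e"
  shows "R \<le> n \<Longrightarrow> \<exists>A d. orthogonal_g n A \<and> transforms_to n A S (Sc n d) \<and> d 0 = 1 \<and>
           (\<forall>j. 0 < j \<and> j < R \<and> j \<noteq> e \<longrightarrow> d j = 0)"
proof (induction R)
  case 0
  then show ?case using c0 A0 by blast
next
  case (Suc R)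
  then obtain A d where Ad: "orthogonal_g n A" "transforms_to n A S (Sc n d)" "d 0 = 1"
    "\<forall>j. 0 < j \<and> j < R \<and> j \<noteq> e \<longrightarrow> d j = 0" by auto
  show ?case
  proof (cases "R = 0 \<or> R = e")
    case True
    then show ?thesis using Ad by (metis less_Suc_eq not_less0)
  next
    case False
    then have "0 < R" "3*R + 1 \<noteq> n" using ex by auto
    moreover have "R \<le> n" using Suc.prems by simp
    ultimately obtain B d' where Bd: "orthogonal_g n B" "transforms_to n B (Sc n d) (Sc n d')"
      "\<forall>j<R. d' j = d j" "d' R = 0"
      using step[of R n d] Ad(3) by blast
    have "orthogonal_g n (mprod n B A)" by (rule orth_comp[OF Ad(1) Bd(1)])
    moreover have "transforms_to n (mprod n B A) S (Sc n d')" by (rule trans_comp[OF Ad(2) Bd(2)])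
    moreover have "d' 0 = 1" using Bd(3) Ad(3) \<open>0 < R\<close> by simp
    moreover have "\<forall>j. 0 < j \<and> j < Suc R \<and> j \<noteq> e \<longrightarrow> d' j = 0"
      using Bd(3,4) Ad(4) by (metis less_Suc_eq)
    ultimately show ?thesis by blast
  qed
qed



lemma final_form:
  assumes d0: "d 0 = 1" and dz: "\<forall>j. 0 < j \<and> j < n \<and> j \<noteq> e \<longrightarrow> d j = 0"
    and a: "a \<in> {1..n}" and b: "b \<in> {1..n}"
  shows "Sc n d u a b = mu n 0 u a b + (if 0 < e \<and> e < n then d e * mu n e u a b else 0)"
proof -
  have "Sc n d u a b = (\<Sum>k\<le>n. (if k = 0 then mu n 0 u a b else 0) + (if k = e \<and> 0 < e \<and> e < n then d e * mu n e u a b else 0))"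
    unfolding Sc_def
  proof (intro sum.cong refl)
    fix k assume k: "k \<in> {..n}"
    show "d k * mu n k u a b = (if k = 0 then mu n 0 u a b else 0) + (if k = e \<and> 0 < e \<and> e < n then d e * mu n e u a b else 0)"
    proof (cases "k = 0")
      case True then show ?thesis using d0 by auto
    next
      case False
      show ?thesis
      proof (cases "k = n")
        case True then show ?thesis using False mu_n[OF a b, of u] by auto
      next
        case False2: False
        then have "k < n" using k by auto
        then show ?thesis using False dz by auto
      qed
    qed
  qed
  also have "\<dots> = mu n 0 u a b + (if 0 < e \<and> e < n then d e * mu n e u a b else 0)"
    by (simp add: sum.distrib)
  finally show ?thesis .
qed

theorem proposition4:
  fixes n :: nat and \<xi> :: "nat \<Rightarrow> real"
  assumes "n \<ge> 2" and "\<xi> 0 \<noteq> 0"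
  defines "S0 \<equiv> (\<lambda>u i j. \<Sum>k=0..n-2. \<xi> k * mu n k u i j)"
  shows "(n mod 3 \<noteq> 1 \<longrightarrow>
            (\<exists>A. orthogonal_g n A \<and> transforms_to n A S0 (mu n 0)))
       \<and> (n mod 3 = 1 \<and> n \<noteq> 4 \<longrightarrow>
            (\<exists>A \<kappa>. orthogonal_g n A \<and>
               transforms_to n A S0 (\<lambda>u i j. mu n 0 u i j + \<kappa> * mu n ((n - 1) div 3) u i j)))"
proof -
  define \<rho> where "\<rho> = 1 / \<xi> 0"
  define \<tau> where "\<tau> = root (n-1) ((\<xi> 0)^2)"
  have n1: "0 < n - 1" using assms(1) by simp
  have tpos: "0 < \<tau>" unfolding \<tau>_def using n1 assms(2) by simp
  have tpow: "\<tau>^(n-1) = (\<xi> 0)^2" unfolding \<tau>_def using n1 by (simp add: real_root_pow_pos2)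
  have rt: "\<rho>^2 * \<tau>^(n-1) = 1" unfolding tpow \<rho>_def using assms(2) by (simp add: power_divide)
  define c where "c k = (if k \<le> n - 2 then \<xi> k * (\<rho> / \<tau>^k) else 0)" for k
  have c0: "c 0 = 1" unfolding c_def \<rho>_def using assms(2) by simp
  have D1: "transforms_to n (Dg \<rho> \<tau>) S0 (\<lambda>u i j. \<Sum>k\<in>{0..n-2}. \<xi> k * ((\<rho> / \<tau>^k) * mu n k u i j))"
    unfolding S0_def by (rule trans_lin[OF finite_atLeastAtMost trans_Dg]) (use tpos in simp)
  have D2: "transforms_to n (Dg \<rho> \<tau>) S0 (Sc n c)"
  proof (rule trans_congT[OF D1])
    fix u a b
    have "Sc n c u a b = (\<Sum>k\<in>{k\<in>{..n}. k \<le> n - 2}. \<xi> k * (\<rho> / \<tau>^k) * mu n k u a b)"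
    proof -
      have "Sc n c u a b = (\<Sum>k\<in>{..n}. if k \<le> n - 2 then \<xi> k * (\<rho> / \<tau>^k) * mu n k u a b else 0)"
        unfolding Sc_def c_def by (intro sum.cong refl) auto
      also have "\<dots> = (\<Sum>k\<in>{k\<in>{..n}. k \<le> n - 2}. \<xi> k * (\<rho> / \<tau>^k) * mu n k u a b)"
        by (rule sum.inter_filter[symmetric]) simp
      finally show ?thesis .
    qed
    also have "{k\<in>{..n}. k \<le> n - 2} = {0..n-2}" by auto
    finally show "(\<Sum>k\<in>{0..n-2}. \<xi> k * ((\<rho> / \<tau>^k) * mu n k u a b)) = Sc n c u a b"
      by (simp add: mult.assoc)
  qed
  have orth0: "orthogonal_g n (Dg \<rho> \<tau>)" by (rule orth_Dg[OF rt])
  define e where "e = (if n mod 3 = 1 then (n - 1) div 3 else 0)"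
  have ex: "r = e" if "3*r + 1 = n" for r
    using that unfolding e_def by auto
  obtain A d where Ad: "orthogonal_g n A" "transforms_to n A S0 (Sc n d)" "d 0 = 1"
    "\<forall>j. 0 < j \<and> j < n \<and> j \<noteq> e \<longrightarrow> d j = 0"
    using iter[OF c0 orth0 D2 ex, of n] by blast
  show ?thesis
  proof (intro conjI impI)
    assume "n mod 3 \<noteq> 1"
    then have e0: "e = 0" unfolding e_def by simp
    have "transforms_to n A S0 (mu n 0)"
    proof (rule trans_congT[OF Ad(2)])
      fix u a b assume "a \<in> {1..n}" "b \<in> {1..n}"
      then show "Sc n d u a b = mu n 0 u a b" using final_form[OF Ad(3) Ad(4)] e0 by simp
    qed
    then show "\<exists>A. orthogonal_g n A \<and> transforms_to n A S0 (mu n 0)" using Ad(1) by blast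
  next
    assume h: "n mod 3 = 1 \<and> n \<noteq> 4"
    then have ee: "e = (n - 1) div 3" unfolding e_def by simp
    have epos: "0 < e" "e < n" using h assms(1) unfolding ee by presburger+
    have "transforms_to n A S0 (\<lambda>u i j. mu n 0 u i j + d e * mu n ((n - 1) div 3) u i j)"
    proof (rule trans_congT[OF Ad(2)])
      fix u a b assume "a \<in> {1..n}" "b \<in> {1..n}"
      then show "Sc n d u a b = mu n 0 u a b + d e * mu n ((n - 1) div 3) u a b"
        using final_form[OF Ad(3) Ad(4)] epos ee by simp
    qed
    then show "\<exists>A \<kappa>. orthogonal_g n A \<and> transforms_to n A S0 (\<lambda>u i j. mu n 0 u i j + \<kappa> * mu n ((n - 1) div 3) u i j)"
      using Ad(1) by blast
  qed
qed

end
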